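(* Let $C_e:=\min\{\tfrac12(\rho/\bar v)^2,\ \tfrac{\sqrt2}{4}(\rho/\bar v)\}$. Under partial information feedback, for any $t\ge2$, the OGD-CB algorithm guarantees $|\mathcal I_t|\ge C_e\,(t-1)$.
   Context: Model: constants $\bar v>0$, $\rho\in(0,\bar v]$; $T$ rounds; budget $B=\rho T$. Round $t$: value $v_t\in[0,\bar v]$, highest competing bid $p_t\in[0,\bar v]$; buyer picks $x_t\in\{0,1\}$, pays $x_tc_t$ with $c_t=p_t\mathbf 1[v_t\ge p_t]$. Partial information feedback: $p_t$ is observed at the end of round $t$ only if $x_t=1$. OGD-CB algorithm: $\mathcal I_1=\emptyset$, $B_1=B$, $\lambda_1=0$. For $t=1,\dots,T$: observe $v_t$. If $t=1$: $x_1=1$, $\lambda_2=\lambda_1$. Otherwise: $\epsilon_t=\sqrt{(\ln 2+2\ln T)/(2|\mathcal I_t|)}$; $\tilde r_t(v)=\frac1{|\mathcal I_t|}\sum_{\tau\in\mathcal I_t}(v-p_\tau)^++\epsilon_tv$; $\tilde c_t(v)=\frac1{|\mathcal I_t|}\sum_{\tau\in\mathcal I_t}p_\tau\mathbf 1[v\ge p_\tau]-2\epsilon_tv$; $x_t=\mathbf 1[\tilde r_t(v_t)\ge\lambda_t\tilde c_t(v_t)]$; $\eta_t=1/(\bar v\sqrt t)$; $\lambda_{t+1}=(\lambda_t+\eta_t(x_t\tilde c_t(v_t)-\rho))^+$. If $x_t=1$, observe $p_t$ and set $\mathcal I_{t+1}=\mathcal I_t\cup\{t\}$, else $\mathcal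 I_{t+1}=\mathcal I_t$. Set $B_{t+1}=B_t-x_tc_t$; if $B_{t+1}<\bar v$, stop. *)

theory Defs
  imports Complex_Main
begin

text \<open>Parameters: vb (= \<bar>v), rho, horizon T, value sequence v, highest competing bid sequence p
  (rounds indexed 1..T).  The state after n rounds is the state at the beginning of round n+1.\<close>

record ogd_state =
  ogd_I :: "nat set"      \<comment> \<open>index set I_t of rounds in which we won (and observed p)\<close>
  ogd_B :: real
  ogd_lam :: real
  ogd_stopped :: bool

definition ogd_eps :: "nat \<Rightarrow> nat \<Rightarrow> real" where
  "ogd_eps T n = sqrt ((ln 2 + 2 * ln (real T)) / (2 * real n))"

definition ogd_rtilde :: "nat \<Rightarrow> (nat \<Rightarrow> real) \<Rightarrow> nat set \<Rightarrow> real \<Rightarrow> real" where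
  "ogd_rtilde T p I x = (1 / real (card I)) * (\<Sum>\<tau>\<in>I. max (x - p \<tau>) 0) + ogd_eps T (card I) * x"

definition ogd_ctilde :: "nat \<Rightarrow> (nat \<Rightarrow> real) \<Rightarrow> nat set \<Rightarrow> real \<Rightarrow> real" where
  "ogd_ctilde T p I x = (1 / real (card I)) * (\<Sum>\<tau>\<in>I. if x \<ge> p \<tau> then p \<tau> else 0)
      - 2 * ogd_eps T (card I) * x"

definition ogd_cost :: "(nat \<Rightarrow> real) \<Rightarrow> (nat \<Rightarrow> real) \<Rightarrow> nat \<Rightarrow> real" where
  "ogd_cost v p t = (if v t \<ge> p t then p t else 0)"

definition ogd_eta :: "real \<Rightarrow> nat \<Rightarrow> real" where
  "ogd_eta vb t = 1 / (vb * sqrt (real t))"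

fun ogd_run :: "real \<Rightarrow> real \<Rightarrow> nat \<Rightarrow> (nat \<Rightarrow> real) \<Rightarrow> (nat \<Rightarrow> real) \<Rightarrow> nat \<Rightarrow> ogd_state" where
  "ogd_run vb rho T v p 0 = \<lparr>ogd_I = {}, ogd_B = rho * real T, ogd_lam = 0, ogd_stopped = False\<rparr>"
| "ogd_run vb rho T v p (Suc n) =
    (let s = ogd_run vb rho T v p n; t = Suc n in
     if ogd_stopped s then s else
     let x = (if t = 1 then True
              else ogd_rtilde T p (ogd_I s) (v t) \<ge> ogd_lam s * ogd_ctilde T p (ogd_I s) (v t));
         lam' = (if t = 1 then ogd_lam s
                 else max 0 (ogd_lam s + ogd_eta vb t *
                        ((if x then ogd_ctilde T p (ogd_I s) (v t) else 0) - rho)));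
         I' = (if x then insert t (ogd_I s) else ogd_I s);
         B' = ogd_B s - (if x then ogd_cost v p t else 0)
     in \<lparr>ogd_I = I', ogd_B = B', ogd_lam = lam', ogd_stopped = (B' < vb)\<rparr>)"

end

theory Submission
  imports Defs
begin


definition xdec :: "real \<Rightarrow> real \<Rightarrow> nat \<Rightarrow> (nat \<Rightarrow> real) \<Rightarrow> (nat \<Rightarrow> real) \<Rightarrow> nat \<Rightarrow> bool" where
  "xdec vb rho T v p n = (Suc n = 1 \<or> ogd_rtilde T p (ogd_I (ogd_run vb rho T v p n)) (v (Suc n))
      \<ge> ogd_lam (ogd_run vb rho T v p n) * ogd_ctilde T p (ogd_I (ogd_run vb rho T v p n)) (v (Suc n)))"

context fixes vb rho :: real and T :: nat and v p :: "nat \<Rightarrow> real"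
begin

abbreviation "S n \<equiv> ogd_run vb rho T v p n"
abbreviation "X n \<equiv> xdec vb rho T v p n"

lemma I_sub: "ogd_I (S n) \<subseteq> {1..n}"
  by (induction n) (auto simp: Let_def)

lemma I_fin: "finite (ogd_I (S n))"
  using I_sub finite_subset by blast

lemma stop_step: "ogd_stopped (S n) \<Longrightarrow> ogd_stopped (S (Suc n))"
  by (simp add: Let_def)

lemma stop_mono: "m \<le> n \<Longrightarrow> \<not> ogd_stopped (S n) \<Longrightarrow> \<not> ogd_stopped (S m)"
proof (induction n)
  case (Suc n)
  have "\<not> ogd_stopped (S n)" using Suc.prems(2) stop_step[of n] by blast
  thus ?case using Suc by (metis le_Suc_eq)
qed auto

lemma I_step: "\<not> ogd_stopped (S n) \<Longrightarrow>
   ogd_I (S (Suc n)) = (if X n then insert (Suc n) (ogd_I (S n)) else ogd_I (S n))"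
  by (simp add: Let_def xdec_def)

lemma lam_step: "\<not> ogd_stopped (S n) \<Longrightarrow>
   ogd_lam (S (Suc n)) = (if n = 0 then ogd_lam (S n) else max 0 (ogd_lam (S n) + ogd_eta vb (Suc n) *
      ((if X n then ogd_ctilde T p (ogd_I (S n)) (v (Suc n)) else 0) - rho)))"
  by (simp add: Let_def xdec_def)

lemma lam_nonneg: "ogd_lam (S n) \<ge> 0"
  by (induction n) (auto simp: Let_def)

lemma I_low: "k \<le> n \<Longrightarrow> ogd_I (S n) \<inter> {..k} = ogd_I (S k)"
proof (induction n)
  case 0 thus ?case using I_sub[of 0] by auto
next
  case (Suc n)
  show ?case
  proof (cases "k = Suc n")
    case True thus ?thesis using I_sub[of "Suc n"] by auto
  next
    case False
    hence "k \<le> n" using Suc by auto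
    thus ?thesis using Suc by (auto simp: Let_def)
  qed
qed

lemma S1: "ogd_I (S 1) = {1}" "ogd_lam (S 1) = 0"
  by (simp_all add: Let_def)

end


lemma step_up: "1 / sqrt (real (Suc n)) \<le> 2 * (sqrt (real (Suc n)) - sqrt (real n))"
proof -
  define a where "a = sqrt (real (Suc n))"
  define b where "b = sqrt (real n)"
  have a0: "a > 0" unfolding a_def by simp
  have b: "b \<le> a" "b \<ge> 0" unfolding a_def b_def by simp_all
  have pr: "(a - b) * (a + b) = 1" unfolding a_def b_def by (simp add: algebra_simps)
  have "(a + b) * (a - b) \<le> (2 * a) * (a - b)" by (rule mult_right_mono) (use b in auto)
  hence "a * (a - b) * 2 \<ge> 1" using pr by (simp add: algebra_simps)
  hence "1 \<le> (2 * (a - b)) * a" by (simp add: algebra_simps)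
  hence "1 / a \<le> 2 * (a - b)" using pos_divide_le_eq[OF a0] by blast
  thus ?thesis unfolding a_def b_def .
qed

lemma step_lo: "n \<ge> 1 \<Longrightarrow> 1 / sqrt (real n) \<ge> 2 * (sqrt (real (Suc n)) - sqrt (real n))"
proof -
  assume n: "n \<ge> 1"
  define a where "a = sqrt (real (Suc n))"
  define b where "b = sqrt (real n)"
  have b0: "b > 0" unfolding b_def using n by simp
  have b: "b \<le> a" unfolding a_def b_def by simp
  have pr: "(a - b) * (a + b) = 1" unfolding a_def b_def by (simp add: algebra_simps)
  have "(2 * b) * (a - b) \<le> (a + b) * (a - b)" by (rule mult_right_mono) (use b in auto)
  hence "b * (a - b) * 2 \<le> 1" using pr by (simp add: algebra_simps)
  hence "1 / b \<ge> 2 * (a - b)" using b0 by (simp add: le_divide_eq algebra_simps)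
  thus ?thesis unfolding a_def b_def .
qed

lemma sum_upper: "(\<Sum>s\<in>{k+1..k+j}. 1 / sqrt (real s)) \<le> 2 * (sqrt (real (k+j)) - sqrt (real k))"
proof (induction j)
  case 0 thus ?case by simp
next
  case (Suc j)
  have "{k+1..k+Suc j} = insert (Suc (k+j)) {k+1..k+j}" by auto
  hence "(\<Sum>s\<in>{k+1..k+Suc j}. 1 / sqrt (real s)) = (\<Sum>s\<in>{k+1..k+j}. 1 / sqrt (real s)) + 1 / sqrt (real (Suc (k+j)))"
    by simp
  also have "\<dots> \<le> 2 * (sqrt (real (k+j)) - sqrt (real k)) + 2 * (sqrt (real (Suc (k+j))) - sqrt (real (k+j)))"
    using Suc.IH step_up[of "k+j"] by linarith
  finally show ?case by simp
qed

lemma sum_lower: "k \<ge> 1 \<Longrightarrow> k \<le> q \<Longrightarrow> (\<Sum>s\<in>{k+1..q}. 1 / sqrt (real s)) \<ge> 2 * (sqrt (real (q+1)) - sqrt (real (k+1)))"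
proof (induction q)
  case 0 thus ?case by simp
next
  case (Suc q)
  show ?case
  proof (cases "k = Suc q")
    case True thus ?thesis by simp
  next
    case False
    hence kq: "k \<le> q" using Suc by auto
    have "{k+1..Suc q} = insert (Suc q) {k+1..q}" using kq by auto
    hence "(\<Sum>s\<in>{k+1..Suc q}. 1 / sqrt (real s)) = (\<Sum>s\<in>{k+1..q}. 1 / sqrt (real s)) + 1 / sqrt (real (Suc q))"
      by simp
    moreover have "1 / sqrt (real (Suc q)) \<ge> 2 * (sqrt (real (Suc (Suc q))) - sqrt (real (Suc q)))"
      by (rule step_lo) simp
    ultimately show ?thesis using Suc.IH[OF Suc.prems(1) kq] by simp
  qed
qed

lemma rearr: "B \<subseteq> {k+1..n} \<Longrightarrow> (\<Sum>s\<in>B. 1 / sqrt (real s)) \<le> (\<Sum>s\<in>{k+1..k+card B}. 1 / sqrt (real s))"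
proof (induction n arbitrary: B)
  case 0 thus ?case by simp
next
  case (Suc n)
  have fin: "finite B" using Suc.prems finite_subset by blast
  show ?case
  proof (cases "Suc n \<in> B")
    case False
    hence "B \<subseteq> {k+1..n}" using Suc.prems by (auto simp: le_Suc_eq)
    thus ?thesis using Suc.IH by blast
  next
    case True
    let ?B = "B - {Suc n}"
    have sub: "?B \<subseteq> {k+1..n}" using Suc.prems by (auto simp: le_Suc_eq)
    have cB: "card B = Suc (card ?B)" proof -
      have "card B > 0" using True fin card_gt_0_iff by blast
      thus ?thesis using True fin by (simp add: card_Diff_singleton)
    qed
    have "card ?B \<le> card {k+1..n}" using card_mono[OF finite_atLeastAtMost sub] .
    moreover have "k \<le> n" using True Suc.prems by auto
    ultimately have le: "k + card ?B + 1 \<le> Suc n" by simp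
    have "(\<Sum>s\<in>B. 1 / sqrt (real s)) = (\<Sum>s\<in>?B. 1 / sqrt (real s)) + 1 / sqrt (real (Suc n))"
      using True fin by (simp add: sum.remove)
    also have "\<dots> \<le> (\<Sum>s\<in>{k+1..k+card ?B}. 1 / sqrt (real s)) + 1 / sqrt (real (k + card ?B + 1))"
    proof -
      have "1 / sqrt (real (Suc n)) \<le> 1 / sqrt (real (k + card ?B + 1))"
        using le by (intro divide_left_mono) auto
      thus ?thesis using Suc.IH[OF sub] by linarith
    qed
    also have "\<dots> = (\<Sum>s\<in>{k+1..k+card B}. 1 / sqrt (real s))"
    proof -
      have "{k+1..k+card B} = insert (k + card ?B + 1) {k+1..k+card ?B}" using cB by auto
      thus ?thesis by simp
    qed
    finally show ?thesis .
  qed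
qed



lemma numeric:
  assumes k: "1 \<le> k" "k \<le> q" and a: "0 < a" "a \<le> 1"
    and h: "a * (\<Sum>s\<in>{k+1..q}. 1 / sqrt (real s)) \<le> (\<Sum>s\<in>{k+1..k+j}. 1 / sqrt (real s))"
  shows "a^2 / 2 * (real q - real k) \<le> real j"
proof -
  define X where "X = sqrt (real k)"
  define Y where "Y = sqrt (real (k+j))"
  define K where "K = sqrt (real (k+1))"
  define Q where "Q = sqrt (real (q+1))"
  have X2: "X^2 = real k" unfolding X_def by simp
  have Y2: "Y^2 = real k + real j" unfolding Y_def by simp
  have K2: "K^2 = real k + 1" unfolding K_def by simp
  have Q2: "Q^2 = real q + 1" unfolding Q_def by simp
  have X0: "X \<ge> 0" "K \<ge> 0" "Q \<ge> 0" unfolding X_def K_def Q_def by simp_all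
  have XY: "X \<le> Y" unfolding X_def Y_def by simp
  have KQ: "K \<le> Q" unfolding K_def Q_def using k by simp
  have "a * (2 * (Q - K)) \<le> a * (\<Sum>s\<in>{k+1..q}. 1 / sqrt (real s))"
    using sum_lower[OF k] a unfolding Q_def K_def by (intro mult_left_mono) auto
  also have "\<dots> \<le> 2 * (Y - X)" using h sum_upper[of k j] unfolding X_def Y_def by linarith
  finally have m: "a * Q \<le> a * K + (Y - X)" by (simp add: algebra_simps)
  have "(a * Q)^2 \<le> (a * K + (Y - X))^2"
    using m X0 a XY by (intro power_mono) auto
  moreover have "(a * Q)^2 = a^2 * (real q + 1)" by (simp add: power_mult_distrib Q2)
  moreover have "(a * K + (Y - X))^2 = a^2 * (real k + 1) + 2 * a * K * (Y - X) + (Y - X)^2"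
    by (simp add: power2_sum power_mult_distrib K2)
  ultimately have "a^2 * (real q + 1) \<le> a^2 * (real k + 1) + 2 * a * K * (Y - X) + (Y - X)^2"
    by simp
  hence e1: "a^2 * (real q - real k) \<le> 2 * a * K * (Y - X) + (Y - X)^2"
    by (simp add: algebra_simps)
  have "K \<le> 2 * X"
  proof -
    have "(2 * X)^2 = 4 * X^2" by (simp add: power_mult_distrib)
    moreover have "real k \<ge> 1" using k by simp
    ultimately have h1: "K^2 \<le> (2 * X)^2" using K2 X2 by linarith
    have h2: "0 \<le> 2 * X" using X0 by simp
    show ?thesis using power2_le_imp_le[OF h1 h2] .
  qed
  moreover have "a * K \<le> K" using a X0 by (simp add: mult_left_le_one_le)
  ultimately have aK: "a * K \<le> 2 * X" by linarith
  have YX: "Y - X \<ge> 0" using XY by simp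
  have e2: "a * K * (Y - X) \<le> 2 * X * (Y - X)" using mult_right_mono[OF aK YX] .
  have e3: "real j = (Y - X)^2 + 2 * X * (Y - X)"
    using X2 Y2 by (simp add: power2_eq_square algebra_simps)
  have "a^2 * (real q - real k) \<le> 2 * real j"
    using e1 e2 e3 zero_le_power2[of "Y - X"] by linarith
  thus ?thesis by simp
qed



lemma ctilde_le: "0 \<le> x \<Longrightarrow> ogd_ctilde T p I x \<le> x - 2 * ogd_eps T (card I) * x"
proof -
  assume x: "0 \<le> x"
  have "(1 / real (card I)) * (\<Sum>\<tau>\<in>I. if x \<ge> p \<tau> then p \<tau> else 0) \<le> x"
  proof (cases "card I = 0")
    case True thus ?thesis using x by simp
  next
    case False
    have "(\<Sum>\<tau>\<in>I. if x \<ge> p \<tau> then p \<tau> else 0) \<le> (\<Sum>\<tau>\<in>I. x)"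
      using x by (intro sum_mono) auto
    hence "(\<Sum>\<tau>\<in>I. if x \<ge> p \<tau> then p \<tau> else 0) \<le> real (card I) * x" by simp
    thus ?thesis using False by (simp add: field_simps)
  qed
  thus ?thesis unfolding ogd_ctilde_def by linarith
qed

lemma rtilde_ge: "ogd_rtilde T p I x \<ge> ogd_eps T (card I) * x"
proof -
  have "(\<Sum>\<tau>\<in>I. max (x - p \<tau>) 0) \<ge> 0" by (intro sum_nonneg) auto
  hence "(1 / real (card I)) * (\<Sum>\<tau>\<in>I. max (x - p \<tau>) 0) \<ge> 0" by simp
  thus ?thesis unfolding ogd_rtilde_def by linarith
qed

lemma eps_nonneg: "1 \<le> T \<Longrightarrow> ogd_eps T n \<ge> 0"
  unfolding ogd_eps_def by simp

lemma nobid_lam: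
  assumes "\<not> (ogd_rtilde T p I x \<ge> lam * ogd_ctilde T p I x)" "0 \<le> x" "0 \<le> lam" "1 \<le> T"
  shows "lam > ogd_eps T (card I)"
proof (rule ccontr)
  let ?e = "ogd_eps T (card I)"
  assume "\<not> lam > ?e"
  hence le: "lam \<le> ?e" by simp
  have e0: "?e \<ge> 0" using eps_nonneg assms(4) .
  have r: "ogd_rtilde T p I x \<ge> ?e * x" by (rule rtilde_ge)
  have c: "ogd_ctilde T p I x \<le> x" using ctilde_le[OF assms(2), of T p I] e0 assms(2)
    by (smt (verit) mult_nonneg_nonneg)
  have "lam * ogd_ctilde T p I x \<le> ogd_rtilde T p I x"
  proof (cases "ogd_ctilde T p I x \<ge> 0")
    case True
    have "lam * ogd_ctilde T p I x \<le> ?e * ogd_ctilde T p I x" using le True by (rule mult_right_mono)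
    also have "\<dots> \<le> ?e * x" using c e0 by (rule mult_left_mono)
    finally show ?thesis using r by linarith
  next
    case False
    hence "lam * ogd_ctilde T p I x \<le> 0" using assms(3) by (simp add: mult_nonneg_nonpos)
    moreover have "?e * x \<ge> 0" using e0 assms(2) by simp
    ultimately show ?thesis using r by linarith
  qed
  thus False using assms(1) by simp
qed

lemma eps_bound:
  assumes "1 \<le> c" "c < q" "q \<le> T"
  shows "ogd_eps T c \<ge> 1 / sqrt (real q)"
proof -
  have q0: "real q > 0" using assms by simp
  have "ln (real q) \<ge> 1 - 1 / real q"
    using ln_le_minus_one[of "1 / real q"] q0 by (simp add: ln_div)
  moreover have "ln (real T) \<ge> ln (real q)" using assms q0 by simp
  moreover have "ln (2::real) \<ge> 0" by simp
  ultimately have h: "ln 2 + 2 * ln (real T) \<ge> 2 * (1 - 1 / real q)"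
    by (smt (verit))
  have "2 * (1 - 1 / real q) = 2 * (real q - 1) / real q" using q0 by (simp add: field_simps)
  also have "\<dots> \<ge> 2 * real c / real q" using assms q0
    by (intro divide_right_mono) auto
  finally have "ln 2 + 2 * ln (real T) \<ge> 2 * real c / real q" using h by linarith
  hence "(ln 2 + 2 * ln (real T)) / (2 * real c) \<ge> (2 * real c / real q) / (2 * real c)"
    using assms by (intro divide_right_mono) auto
  also have "(2 * real c / real q) / (2 * real c) = 1 / real q" using assms by simp
  finally have "sqrt ((ln 2 + 2 * ln (real T)) / (2 * real c)) \<ge> sqrt (1 / real q)" by simp
  thus ?thesis unfolding ogd_eps_def by (simp add: real_sqrt_divide)
qed



context
  fixes vb rho :: real and T :: nat and v p :: "nat \<Rightarrow> real"
  assumes vb: "vb > 0" and rho: "0 < rho" "rho \<le> vb"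
    and rng: "\<forall>s\<in>{1..T}. 0 \<le> v s \<and> v s \<le> vb \<and> 0 \<le> p s \<and> p s \<le> vb"
    and T1: "1 \<le> T"
begin

abbreviation "St n \<equiv> ogd_run vb rho T v p n"
abbreviation "Xd n \<equiv> xdec vb rho T v p n"

lemma a_bounds: "0 < rho / vb" "rho / vb \<le> 1"
  using vb rho by auto

lemma eta_rho: "ogd_eta vb t * rho = (rho / vb) / sqrt (real t)"
  unfolding ogd_eta_def using vb by (simp add: field_simps)

lemma eta_vb: "ogd_eta vb t * vb = 1 / sqrt (real t)"
  unfolding ogd_eta_def using vb by (simp add: field_simps)

lemma eta_nonneg: "ogd_eta vb t \<ge> 0"
  unfolding ogd_eta_def using vb by simp

lemma walk:
  "1 \<le> n \<Longrightarrow> n \<le> T \<Longrightarrow> \<not> ogd_stopped (St n) \<Longrightarrow>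
   \<exists>k. 1 \<le> k \<and> k \<le> n \<and> ogd_lam (St n) \<le> (\<Sum>s\<in>ogd_I (St n) \<inter> {k+1..n}. 1 / sqrt (real s))
        - (rho / vb) * (\<Sum>s\<in>{k+1..n}. 1 / sqrt (real s))"
proof (induction n)
  case 0 thus ?case by simp
next
  case (Suc n)
  show ?case
  proof (cases "n = 0")
    case True
    thus ?thesis using S1(2)[of vb rho T v p] by (intro exI[of _ 1]) simp
  next
    case False
    hence n1: "1 \<le> n" by simp
    have ns: "\<not> ogd_stopped (St n)" using stop_mono[of n "Suc n"] Suc.prems by simp
    obtain k where k: "1 \<le> k" "k \<le> n" and
      IH: "ogd_lam (St n) \<le> (\<Sum>s\<in>ogd_I (St n) \<inter> {k+1..n}. 1 / sqrt (real s))
        - (rho / vb) * (\<Sum>s\<in>{k+1..n}. 1 / sqrt (real s))"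
      using Suc.IH[OF n1 _ ns] Suc.prems by auto
    define a where "a = rho / vb"
    define lam where "lam = ogd_lam (St n)"
    define I where "I = ogd_I (St n)"
    define A where "A = (\<Sum>s\<in>I \<inter> {k+1..n}. 1 / sqrt (real s))"
    define B where "B = (\<Sum>s\<in>{k+1..n}. 1 / sqrt (real s))"
    define w where "w = 1 / sqrt (real (Suc n))"
    have IH': "lam \<le> A - a * B" using IH unfolding lam_def A_def B_def I_def a_def .
    have lam0: "lam \<ge> 0" unfolding lam_def by (rule lam_nonneg)
    have Isub: "I \<subseteq> {1..n}" unfolding I_def by (rule I_sub)
    have fin: "finite (I \<inter> {k+1..n})" by simp
    have nI: "Suc n \<notin> I" using Isub by auto
    have B': "(\<Sum>s\<in>{k+1..Suc n}. 1 / sqrt (real s)) = B + w"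
    proof -
      have "{k+1..Suc n} = insert (Suc n) {k+1..n}" using k by auto
      thus ?thesis unfolding B_def w_def by simp
    qed
    have vt: "0 \<le> v (Suc n)" "v (Suc n) \<le> vb" using rng Suc.prems(2) by auto
    have a1: "0 < a" "a \<le> 1" unfolding a_def using a_bounds by auto
    show ?thesis
    proof (cases "Xd n")
      case True
      have I': "ogd_I (St (Suc n)) = insert (Suc n) I" using I_step[OF ns] True unfolding I_def by simp
      have "ogd_I (St (Suc n)) \<inter> {k+1..Suc n} = insert (Suc n) (I \<inter> {k+1..n})"
        using I' Isub k by auto
      hence A': "(\<Sum>s\<in>ogd_I (St (Suc n)) \<inter> {k+1..Suc n}. 1 / sqrt (real s)) = A + w"
        using nI fin unfolding A_def w_def by simp
      define c where "c = ogd_ctilde T p I (v (Suc n))"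
      have "c \<le> v (Suc n) - 2 * ogd_eps T (card I) * v (Suc n)" unfolding c_def by (rule ctilde_le[OF vt(1)])
      moreover have "ogd_eps T (card I) * v (Suc n) \<ge> 0" using eps_nonneg[OF T1] vt by simp
      ultimately have c: "c \<le> vb" using vt by linarith
      have "ogd_eta vb (Suc n) * (c - rho) \<le> ogd_eta vb (Suc n) * (vb - rho)"
        using c eta_nonneg by (intro mult_left_mono) auto
      also have "\<dots> = w - a * w" unfolding w_def a_def
        using eta_rho[of "Suc n"] eta_vb[of "Suc n"] by (simp add: right_diff_distrib)
      finally have inc: "ogd_eta vb (Suc n) * (c - rho) \<le> w - a * w" .
      have w0: "w \<ge> 0" unfolding w_def by simp
      have aw: "a * w \<le> w" using a1 w0 by (simp add: mult_left_le_one_le)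
      have "ogd_lam (St (Suc n)) = max 0 (lam + ogd_eta vb (Suc n) * (c - rho))"
        using lam_step[OF ns] True False unfolding lam_def c_def I_def by simp
      also have "\<dots> \<le> lam + (w - a * w)" using inc lam0 aw by simp
      also have "\<dots> \<le> (A + w) - a * (B + w)" using IH' by (simp add: algebra_simps)
      finally show ?thesis using A' B' k unfolding a_def by (intro exI[of _ k]) auto
    next
      case nb: False
      have I': "ogd_I (St (Suc n)) = I" using I_step[OF ns] nb unfolding I_def by simp
      have "ogd_I (St (Suc n)) \<inter> {k+1..Suc n} = I \<inter> {k+1..n}"
        using I' Isub k by auto
      hence A': "(\<Sum>s\<in>ogd_I (St (Suc n)) \<inter> {k+1..Suc n}. 1 / sqrt (real s)) = A"
        unfolding A_def by simp
      have ls: "ogd_lam (St (Suc n)) = max 0 (lam - a * w)"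
        using lam_step[OF ns] nb False eta_rho[of "Suc n"] unfolding lam_def a_def w_def by simp
      show ?thesis
      proof (cases "lam - a * w \<le> 0")
        case True
        hence "ogd_lam (St (Suc n)) = 0" using ls by simp
        thus ?thesis by (intro exI[of _ "Suc n"]) simp
      next
        case False
        hence "ogd_lam (St (Suc n)) = lam - a * w" using ls by simp
        also have "\<dots> \<le> A - a * (B + w)" using IH' by (simp add: algebra_simps)
        finally show ?thesis using A' B' k unfolding a_def by (intro exI[of _ k]) auto
      qed
    qed
  qed
qed

lemma main:
  "1 \<le> q \<Longrightarrow> q \<le> T \<Longrightarrow> \<not> ogd_stopped (St q) \<Longrightarrow>
   min ((1/2) * (rho / vb)^2) ((sqrt 2 / 4) * (rho / vb)) * real q \<le> real (card (ogd_I (St q)))"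
proof (induction q rule: less_induct)
  case (less q)
  define a where "a = rho / vb"
  define C where "C = min ((1/2) * (rho / vb)^2) ((sqrt 2 / 4) * (rho / vb))"
  have a1: "0 < a" "a \<le> 1" unfolding a_def using a_bounds by auto
  have Ca: "C \<le> a^2 / 2" unfolding C_def a_def by simp
  have "a^2 \<le> 1" using a1 by (simp add: power_le_one)
  hence C1: "C \<le> 1" using Ca by linarith
  have "C * real q \<le> real (card (ogd_I (St q)))"
  proof (cases "q = 1")
    case True
    have cq: "real (card (ogd_I (St q))) = 1" using True S1(1)[of vb rho T v p] by simp
    have "C * real q \<le> 1" using C1 True by simp
    thus ?thesis using cq by linarith
  next
    case False
    then obtain n where qn: "q = Suc n" and n1: "1 \<le> n" using less.prems(1)
      by (metis One_nat_def Suc_le_D Suc_le_eq le_neq_implies_less less_one not_less_eq)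
    have ns: "\<not> ogd_stopped (St n)" using stop_mono[of n q] less.prems qn by simp
    have IHn: "C * real n \<le> real (card (ogd_I (St n)))"
      using less.IH[of n] qn n1 ns less.prems unfolding C_def by simp
    define I where "I = ogd_I (St n)"
    have Isub: "I \<subseteq> {1..n}" unfolding I_def by (rule I_sub)
    have finI: "finite I" using Isub finite_subset by blast
    have nI: "Suc n \<notin> I" using Isub by auto
    show ?thesis
    proof (cases "Xd n")
      case True
      have I': "ogd_I (St q) = insert (Suc n) I" using I_step[OF ns] True qn unfolding I_def by simp
      hence "card (ogd_I (St q)) = Suc (card I)" using nI finI by simp
      thus ?thesis using IHn C1 qn unfolding I_def by (simp add: algebra_simps)
    next
      case nb: False
      have I': "ogd_I (St q) = I" using I_step[OF ns] nb qn unfolding I_def by simp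
      obtain k where k: "1 \<le> k" "k \<le> n" and
        W: "ogd_lam (St n) \<le> (\<Sum>s\<in>I \<inter> {k+1..n}. 1 / sqrt (real s))
          - a * (\<Sum>s\<in>{k+1..n}. 1 / sqrt (real s))"
        using walk[OF n1 _ ns] less.prems qn unfolding I_def a_def by auto
      define Bs where "Bs = I \<inter> {k+1..n}"
      define A where "A = (\<Sum>s\<in>Bs. 1 / sqrt (real s))"
      define B where "B = (\<Sum>s\<in>{k+1..n}. 1 / sqrt (real s))"
      define w where "w = 1 / sqrt (real q)"
      have vt: "0 \<le> v (Suc n)" using rng less.prems(2) qn by auto
      have nob: "\<not> (ogd_rtilde T p I (v (Suc n)) \<ge> ogd_lam (St n) * ogd_ctilde T p I (v (Suc n)))"
        using nb n1 unfolding xdec_def I_def by simp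
      have lg: "ogd_lam (St n) > ogd_eps T (card I)"
        by (rule nobid_lam[OF nob vt lam_nonneg T1])
      have "1 \<in> I" using I_low[of 1 n vb rho T v p] S1(1)[of vb rho T v p] n1 unfolding I_def by auto
      hence c1: "1 \<le> card I" using finI by (metis One_nat_def Suc_leI card_gt_0_iff empty_iff)
      have "card I \<le> card {1..n}" using card_mono[OF _ Isub] by simp
      hence c2: "card I < q" using qn by simp
      have "ogd_eps T (card I) \<ge> w" unfolding w_def by (rule eps_bound[OF c1 c2 less.prems(2)])
      moreover have "a * w \<le> w" using a1 mult_left_le_one_le[of w a] unfolding w_def by simp
      ultimately have "a * w \<le> A - a * B" using lg W unfolding A_def B_def Bs_def by linarith
      moreover have "(\<Sum>s\<in>{k+1..q}. 1 / sqrt (real s)) = B + w"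
      proof -
        have "{k+1..q} = insert q {k+1..n}" using k qn by auto
        thus ?thesis unfolding B_def w_def using qn by simp
      qed
      ultimately have h1: "a * (\<Sum>s\<in>{k+1..q}. 1 / sqrt (real s)) \<le> A"
        by (simp add: algebra_simps)
      have "A \<le> (\<Sum>s\<in>{k+1..k + card Bs}. 1 / sqrt (real s))"
        unfolding A_def by (rule rearr[of Bs k n]) (simp add: Bs_def)
      hence "a * (\<Sum>s\<in>{k+1..q}. 1 / sqrt (real s)) \<le> (\<Sum>s\<in>{k+1..k + card Bs}. 1 / sqrt (real s))"
        using h1 by linarith
      hence jb: "a^2 / 2 * (real q - real k) \<le> real (card Bs)"
        using numeric[of k q a "card Bs"] k qn a1 by simp
      have "I \<inter> {..k} = ogd_I (St k)" using I_low[of k n] k unfolding I_def by simp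
      moreover have e1: "I = (I \<inter> {..k}) \<union> Bs" and e2: "(I \<inter> {..k}) \<inter> Bs = {}"
        unfolding Bs_def using Isub by auto
      moreover have "card ((I \<inter> {..k}) \<union> Bs) = card (I \<inter> {..k}) + card Bs"
        using e2 finI by (intro card_Un_disjoint) (auto simp: Bs_def)
      ultimately have cI: "card I = card (ogd_I (St k)) + card Bs" by simp
      have nsk: "\<not> ogd_stopped (St k)" using stop_mono[of k n] k ns by simp
      have IHk: "C * real k \<le> real (card (ogd_I (St k)))"
        using less.IH[of k] k qn nsk less.prems unfolding C_def by simp
      have "C * (real q - real k) \<le> a^2 / 2 * (real q - real k)"
        using Ca k qn by (intro mult_right_mono) auto
      hence "C * real q \<le> real (card (ogd_I (St k))) + real (card Bs)"
        using IHk jb by (simp add: algebra_simps)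
      thus ?thesis using cI I' by simp
    qed
  qed
  thus ?case unfolding C_def .
qed

end

theorem lemma5:
  fixes vb rho :: real and T t :: nat and v p :: "nat \<Rightarrow> real"
  assumes "vb > 0" and "0 < rho" and "rho \<le> vb"
    and "\<forall>s\<in>{1..T}. 0 \<le> v s \<and> v s \<le> vb \<and> 0 \<le> p s \<and> p s \<le> vb"
    and "2 \<le> t" and "t \<le> T"
    and "\<not> ogd_stopped (ogd_run vb rho T v p (t - 1))"
  shows "real (card (ogd_I (ogd_run vb rho T v p (t - 1))))
           \<ge> min ((1/2) * (rho / vb)^2) ((sqrt 2 / 4) * (rho / vb)) * real (t - 1)"
proof -
  have T1: "1 \<le> T" using assms(5,6) by simp
  have q1: "1 \<le> t - 1" "t - 1 \<le> T" using assms(5,6) by auto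
  show ?thesis using main[OF assms(1-4) T1 q1 assms(7)] .
qed

end
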